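(* Let $\bar{\mathcal{G}}=(\bar{\mathcal{V}},\bar{\mathcal{E}})$ be the edge localization graph of the communication graph $\mathcal{G}$ (as defined in the context). If $\bar{\mathcal{G}}$ has an oriented spanning tree with root vertex $r$, then its directed line graph $L(\bar{\mathcal{G}})=(\bar{\mathcal{E}},L(\bar{\mathcal{E}}))$ has an oriented spanning tree with root edge $(r,v)$ for each neighbor $v$ of $r$ in $\bar{\mathcal{G}}$.
   Context: Setting. There are $N$ agents $\mathcal{V}=\{1,\dots,N\}$ in the plane. A set $\mathcal{S}$ of subtended angle measurements is given: an element $\alpha^{u}_{wv}\in\mathcal{S}$ (with $u,v,w$ distinct agents) is the counterclockwise angle in $[-\pi,\pi)$ measured at agent $u$ from the direction of agent $v$ to the direction of agent $w$; $\alpha^{u}_{wv}\in\mathcal{S}$ if and only if $\alpha^{u}_{vw}=-\alpha^{u}_{wv}\in\mathcal{S}$. The communication graph $\mathcal{G}=(\mathcal{V},\mathcal{E})$ is the directed graph whose edges are exactly the ordered pairs $(u,v),(v,u),(u,w),(w,u)$ for all $\alpha^{u}_{wv}\in\mathcal{S}$; it is symmetric and is assumed connected. Edge localization graph. For each edge $(u,v)\in\mathcal{E}$ such that there is no $w$ with $\alpha^{v}_{wu}\in\mathcal{S}$, introduce a new virtual vertex $\bar v^{u}$ (distinct for distinct such pairs $(u,v)$; co-located with agent $v$). Let $\mathcal{E}^{u}=\{(u,\bar v^{u}),(\bar v^{u},u) : (u,v)\in\mathcal{E},\ \nexists w \text{ with } \alpha^{v}_{wu}\in\mathcal{S}\}$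 and $\mathcal{V}^{u}$ the set of all these virtual vertices. Then $\bar{\mathcal{V}}=\bigl(\mathcal{V}\setminus\{u\in\mathcal{V}: \text{no } \alpha^{u}_{wv}\in\mathcal{S} \text{ for any } v,w\}\bigr)\cup\mathcal{V}^{u}$ and $\bar{\mathcal{E}}=\bigl(\mathcal{E}\setminus\{(u,v),(v,u): (u,v)\in\mathcal{E},\ \nexists w \text{ with }\alpha^{v}_{wu}\in\mathcal{S}\}\bigr)\cup\mathcal{E}^{u}$. A neighbor of $r$ in $\bar{\mathcal{G}}$ is a vertex $v$ with $(r,v)\in\bar{\mathcal{E}}$. For a directed edge $e=(u,v)$, $t(e)=u$, $h(e)=v$. The directed line graph $L(\bar{\mathcal{G}})$ has vertex set $\bar{\mathcal{E}}$ and edge set $L(\bar{\mathcal{E}})=\{(e_1,e_2): h(e_1)=t(e_2)\}$. An oriented spanning tree of a directed graph with root $r$ is an acyclic subgraph containing all vertices in which every vertex other than $r$ has a directed path to $r$. *)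

theory Defs
  imports Main
begin

text \<open>A subtended angle measurement alpha^u_{wv} is represented by the triple (u, w, v):
  measured at agent u, from the direction of v to the direction of w.
  Only the set of available measurements matters for the graph constructions.\<close>

definition comm_edges :: "('a \<times> 'a \<times> 'a) set \<Rightarrow> ('a \<times> 'a) set" where
  "comm_edges S = {e. \<exists>u w v. (u, w, v) \<in> S \<and>
      (e = (u, v) \<or> e = (v, u) \<or> e = (u, w) \<or> e = (w, u))}"

definition no_meas :: "('a \<times> 'a \<times> 'a) set \<Rightarrow> 'a \<Rightarrow> 'a \<Rightarrow> bool" where
  "no_meas S v u \<longleftrightarrow> \<not> (\<exists>w. (v, w, u) \<in> S)"

text \<open>Vertices of the edge localization graph: real agents, and virtual vertices
  Virt u v standing for \<open>v-bar^u\<close> (a copy of v attached to u).\<close>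
datatype 'a lvert = Real 'a | Virt 'a 'a

definition eloc_vertices :: "'a set \<Rightarrow> ('a \<times> 'a \<times> 'a) set \<Rightarrow> 'a lvert set" where
  "eloc_vertices V S =
     Real ` {u \<in> V. \<exists>v w. (u, w, v) \<in> S}
     \<union> {Virt u v | u v. (u, v) \<in> comm_edges S \<and> no_meas S v u}"

definition eloc_edges :: "('a \<times> 'a \<times> 'a) set \<Rightarrow> ('a lvert \<times> 'a lvert) set" where
  "eloc_edges S =
     {(Real a, Real b) | a b. (a, b) \<in> comm_edges S
        \<and> \<not> (\<exists>u v. (u, v) \<in> comm_edges S \<and> no_meas S v u
                 \<and> ((a, b) = (u, v) \<or> (a, b) = (v, u)))}
     \<union> {(Real u, Virt u v) | u v. (u, v) \<in> comm_edges S \<and> no_meas S v u}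
     \<union> {(Virt u v, Real u) | u v. (u, v) \<in> comm_edges S \<and> no_meas S v u}"

definition line_edges :: "('b \<times> 'b) set \<Rightarrow> (('b \<times> 'b) \<times> ('b \<times> 'b)) set" where
  "line_edges E = {(e1, e2). e1 \<in> E \<and> e2 \<in> E \<and> snd e1 = fst e2}"

definition has_oriented_spanning_tree :: "'b set \<Rightarrow> ('b \<times> 'b) set \<Rightarrow> 'b \<Rightarrow> bool" where
  "has_oriented_spanning_tree Vs Es r \<longleftrightarrow> r \<in> Vs \<and>
     (\<exists>T. T \<subseteq> Es \<and> T \<subseteq> Vs \<times> Vs \<and> acyclic T \<and> (\<forall>x\<in>Vs. x \<noteq> r \<longrightarrow> (x, r) \<in> T\<^sup>+))"

end

theory Submission
  imports Defs
begin

lemma ost_general: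
  assumes r: "r \<in> Vs" and sub: "Es \<subseteq> Vs \<times> Vs" and reach: "\<forall>x\<in>Vs. (x, r) \<in> Es\<^sup>*"
  shows "has_oriented_spanning_tree Vs Es r"
proof -
  define d where "d x = (LEAST n. (x, r) \<in> Es ^^ n)" for x
  have dex: "(x, r) \<in> Es ^^ d x" if "x \<in> Vs" for x
  proof -
    from reach that obtain n where "(x, r) \<in> Es ^^ n" using rtrancl_power by blast
    then show ?thesis unfolding d_def by (rule LeastI)
  qed
  have step: "\<exists>y. (x, y) \<in> Es \<and> d y < d x" if xV: "x \<in> Vs" and xnr: "x \<noteq> r" for x
  proof -
    have xr: "(x, r) \<in> Es ^^ d x" using dex xV .
    obtain m where dm: "d x = Suc m" using xr xnr by (cases "d x") auto
    then obtain y where y: "(x, y) \<in> Es" "(y, r) \<in> Es ^^ m" using xr relpow_Suc_D2 by metis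
    have "d y \<le> m" unfolding d_def using y(2) by (rule Least_le)
    with y dm show ?thesis by auto
  qed
  define f where "f x = (SOME y. (x, y) \<in> Es \<and> d y < d x)" for x
  have f: "(x, f x) \<in> Es \<and> d (f x) < d x" if "x \<in> Vs" "x \<noteq> r" for x
    unfolding f_def using step[OF that] by (rule someI_ex)
  define T where "T = {(x, f x) | x. x \<in> Vs \<and> x \<noteq> r}"
  have TE: "T \<subseteq> Es" using f unfolding T_def by auto
  have TV: "T \<subseteq> Vs \<times> Vs" using TE sub by auto
  have "T\<inverse> \<subseteq> inv_image less_than d" using f unfolding T_def by auto
  then have "wf (T\<inverse>)" using wf_subset wf_inv_image wf_less_than by blast
  then have "acyclic (T\<inverse>)" by (rule wf_acyclic)
  then have acyc: "acyclic T" by (simp add: acyclic_converse)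
  have "(x, r) \<in> T\<^sup>+" if "x \<in> Vs" "x \<noteq> r" for x
    using that
  proof (induction "d x" arbitrary: x rule: less_induct)
    case less
    have e: "(x, f x) \<in> T" using less.prems unfolding T_def by auto
    show ?case
    proof (cases "f x = r")
      case True then show ?thesis using e by auto
    next
      case False
      have "f x \<in> Vs" using f[OF less.prems] sub by auto
      then have "(f x, r) \<in> T\<^sup>+" using less.hyps f[OF less.prems] False by blast
      then show ?thesis using e by auto
    qed
  qed
  then show ?thesis unfolding has_oriented_spanning_tree_def using r TE TV acyc by blast
qed

lemma comm_sym: "(a, b) \<in> comm_edges S \<Longrightarrow> (b, a) \<in> comm_edges S"
  unfolding comm_edges_def by blast

lemma head_in_vertices:
  assumes wf: "\<And>u w v. (u, w, v) \<in> S \<Longrightarrow> u \<in> V \<and> v \<in> V \<and> w \<in> V \<and> u \<noteq> v \<and> u \<noteq> w \<and> v \<noteq> w"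
    and symS: "\<And>u w v. (u, w, v) \<in> S \<longleftrightarrow> (u, v, w) \<in> S"
    and e: "(x, y) \<in> eloc_edges S"
  shows "y \<in> eloc_vertices V S"
  using e unfolding eloc_edges_def
proof (elim UnE CollectE exE conjE)
  fix a b assume h: "(x, y) = (Real a, Real b)" "(a, b) \<in> comm_edges S"
    "\<not> (\<exists>u v. (u, v) \<in> comm_edges S \<and> no_meas S v u \<and> ((a, b) = (u, v) \<or> (a, b) = (v, u)))"
  then have "\<not> no_meas S b a" by (metis (no_types))
  then obtain w where w: "(b, w, a) \<in> S" unfolding no_meas_def by blast
  have "b \<in> V" using wf[OF w] by simp
  then have "Real b \<in> Real ` {u \<in> V. \<exists>v w. (u, w, v) \<in> S}" using w by blast
  then show ?thesis using h(1) unfolding eloc_vertices_def by simp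
next
  fix u v assume "(x, y) = (Real u, Virt u v)" "(u, v) \<in> comm_edges S" "no_meas S v u"
  then show ?thesis unfolding eloc_vertices_def by blast
next
  fix u v assume h: "(x, y) = (Virt u v, Real u)" "(u, v) \<in> comm_edges S" "no_meas S v u"
  from h(2) obtain u' w' v' where m: "(u', w', v') \<in> S"
    "(u, v) = (u', v') \<or> (u, v) = (v', u') \<or> (u, v) = (u', w') \<or> (u, v) = (w', u')"
    unfolding comm_edges_def by blast
  have ex: "\<exists>a b. (u, a, b) \<in> S"
    using m(2)
  proof (elim disjE)
    assume "(u, v) = (v', u')"
    then have "(v, w', u) \<in> S" using m(1) by simp
    then show ?thesis using h(3) unfolding no_meas_def by blast
  next
    assume "(u, v) = (w', u')"
    then have "(v, u, v') \<in> S" using m(1) by simp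
    then have "(v, v', u) \<in> S" using symS by blast
    then show ?thesis using h(3) unfolding no_meas_def by blast
  qed (use m(1) in auto)
  then obtain a b where ab: "(u, a, b) \<in> S" by blast
  have "u \<in> V" using wf[OF ab] by simp
  then have "Real u \<in> Real ` {u \<in> V. \<exists>v w. (u, w, v) \<in> S}" using ab by blast
  then show ?thesis using h(1) unfolding eloc_vertices_def by simp
qed

theorem lemma5:
  fixes V :: "'a set" and S :: "('a \<times> 'a \<times> 'a) set" and r :: "'a lvert"
  assumes finV: "finite V"
    and wf: "\<And>u w v. (u, w, v) \<in> S \<Longrightarrow> u \<in> V \<and> v \<in> V \<and> w \<in> V \<and> u \<noteq> v \<and> u \<noteq> w \<and> v \<noteq> w"
    and symS: "\<And>u w v. (u, w, v) \<in> S \<longleftrightarrow> (u, v, w) \<in> S"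
    and conn: "\<forall>x\<in>V. \<forall>y\<in>V. (x, y) \<in> (comm_edges S)\<^sup>*"
    and tree: "has_oriented_spanning_tree (eloc_vertices V S) (eloc_edges S) r"
  shows "\<forall>v. (r, v) \<in> eloc_edges S \<longrightarrow>
           has_oriented_spanning_tree (eloc_edges S) (line_edges (eloc_edges S)) (r, v)"
proof (intro allI impI)
  fix v assume rv: "(r, v) \<in> eloc_edges S"
  let ?E = "eloc_edges S"
  obtain T where T: "T \<subseteq> ?E" "\<forall>x\<in>eloc_vertices V S. x \<noteq> r \<longrightarrow> (x, r) \<in> T\<^sup>+"
    using tree unfolding has_oriented_spanning_tree_def by blast
  have breach: "(b, r) \<in> ?E\<^sup>*" if "b \<in> eloc_vertices V S" for b
  proof (cases "b = r")
    case False
    then have "(b, r) \<in> T\<^sup>+" using T that by blast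
    then have "(b, r) \<in> T\<^sup>*" by auto
    then show ?thesis using rtrancl_mono[OF T(1)] by blast
  qed auto
  have key: "\<And>a. (a, b) \<in> ?E \<Longrightarrow> ((a, b), (r, v)) \<in> (line_edges ?E)\<^sup>*"
    if "(b, r) \<in> ?E\<^sup>*" for b
    using that
  proof (induction rule: converse_rtrancl_induct)
    case base
    then have "((a, r), (r, v)) \<in> line_edges ?E" using rv unfolding line_edges_def by auto
    then show ?case by auto
  next
    case (step b c)
    have "((a, b), (b, c)) \<in> line_edges ?E" using step unfolding line_edges_def by auto
    moreover have "((b, c), (r, v)) \<in> (line_edges ?E)\<^sup>*" using step by blast
    ultimately show ?case by (rule converse_rtrancl_into_rtrancl)
  qed
  have "\<forall>e\<in>?E. (e, (r, v)) \<in> (line_edges ?E)\<^sup>*"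
  proof
    fix e assume e: "e \<in> ?E"
    obtain a b where ab: "e = (a, b)" by (cases e)
    have "b \<in> eloc_vertices V S" using head_in_vertices[OF wf symS] e ab by blast
    then have "(b, r) \<in> ?E\<^sup>*" by (rule breach)
    moreover have "(a, b) \<in> ?E" using e ab by simp
    ultimately show "(e, (r, v)) \<in> (line_edges ?E)\<^sup>*" using ab by (simp add: key)
  qed
  moreover have "line_edges ?E \<subseteq> ?E \<times> ?E" unfolding line_edges_def by auto
  ultimately show "has_oriented_spanning_tree ?E (line_edges ?E) (r, v)"
    by (intro ost_general[OF rv])
qed

end
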